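(* Let $\tau_0\geq 3$. Consider an oriented hyperbolic surface with boundary equipped with an ideal triangulation with zero shear, with dual graph $\mathcal{G}$, and run the process that at each step chooses uniformly at random a pair $\{h_1,h_2\}$ of distinct half-edges of the current dual graph with $\tau(h_1,h_2)\geq\tau_0$ and glues the corresponding boundary sides (with zero shear, orientation-reversing), producing dual graphs $\mathcal{G}^{(t)}$. If $\mathcal{G}^{(t)}$ is safe for some $t$, then $\mathcal{G}^{(t+1)}$ is also safe; hence from then on the process saturates (i.e. continues until no half-edges remain) with certainty.
   Context: The dual graph $\mathcal{G}$ of a zero-shear ideal triangulation has one trivalent vertex per triangle, an edge for each interior side and a half-edge for each boundary side; the orientation of the surface makes it a ribbon graph. A non-backtracking path in $\mathcal{G}$ carries a word in the letters $L,R$ recording whether it turns left or right at each vertex it traverses; replacing $L$ by $\begin{pmatrix}1&1\\0&1\end{pmatrix}$ and $R$ by $\begin{pmatrix}1&0\\1&1\end{pmatrix}$ gives a matrix whose trace is the trace of the path. For distinct half-edges $h_1,h_2$, the trace distance $\tau(h_1,h_2)$ is the minimum of the traces greater than $2$ of paths starting on $h_1$ and ending on $h_2$ (and $+\infty$ if there are none). $\mathcal{G}$ is called safe if (1) $\tau(h,h')\geq\tau_0$ for all pairs of distinct half-edges $h,h'$, and (2) every cusp on the boundary of the associated surface is incident to at least $\sqrt{\tau_0-2}$ triangles, i.e. whenever two half-edges are connected by a path carrying $L^k$ or $R^k$, then $k\geq\sqrt{\tau_0-2}$. *)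

theory Defs
  imports "HOL-Analysis.Analysis"
begin

text \<open>Ribbon graphs with half-edges, encoded by darts (flags).
  Each dart lies at a vertex; rot is the cyclic (orientation) order of the
  darts around their vertex; opp pairs the two darts of an interior edge,
  and a dart fixed by opp is a half-edge (a boundary side).\<close>

record 'd rgraph =
  darts :: "'d set"
  rot :: "'d \<Rightarrow> 'd"
  opp :: "'d \<Rightarrow> 'd"

definition trivalent_ribbon_graph :: "'d rgraph \<Rightarrow> bool" where
  "trivalent_ribbon_graph G \<longleftrightarrow>
     finite (darts G) \<and>
     bij_betw (rot G) (darts G) (darts G) \<and>
     (\<forall>d\<in>darts G. rot G d \<noteq> d \<and> rot G (rot G (rot G d)) = d) \<and>
     (\<forall>d\<in>darts G. opp G d \<in> darts G \<and> opp G (opp G d) = d)"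

definition half_edges :: "'d rgraph \<Rightarrow> 'd set" where
  "half_edges G = {d \<in> darts G. opp G d = d}"

definition glue :: "'d rgraph \<Rightarrow> 'd \<Rightarrow> 'd \<Rightarrow> 'd rgraph" where
  "glue G h1 h2 = G\<lparr>opp := (opp G)(h1 := h2, h2 := h1)\<rparr>"

text \<open>Turn letters: True = L, False = R.  Entering a vertex through dart e,
  a left turn leaves through rot e, a right turn through rot (rot e) (= rot^-1 e).
  (Swapping the convention does not change any trace.)\<close>
definition exit_dart :: "'d rgraph \<Rightarrow> bool \<Rightarrow> 'd \<Rightarrow> 'd" where
  "exit_dart G b e = (if b then rot G e else rot G (rot G e))"

text \<open>walk G e w f: the non-backtracking path entering its first vertex through
  dart e, turning according to the word w at each traversed vertex,
  and leaving its last vertex through dart f.\<close>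
fun walk :: "'d rgraph \<Rightarrow> 'd \<Rightarrow> bool list \<Rightarrow> 'd \<Rightarrow> bool" where
  "walk G e [] f = False"
| "walk G e [b] f = (exit_dart G b e = f)"
| "walk G e (b # c # w) f =
     (let x = exit_dart G b e in opp G x \<noteq> x \<and> walk G (opp G x) (c # w) f)"

definition path_words :: "'d rgraph \<Rightarrow> 'd \<Rightarrow> 'd \<Rightarrow> bool list set" where
  "path_words G h1 h2 = {w. h1 \<in> half_edges G \<and> h2 \<in> half_edges G \<and> walk G h1 w h2}"

definition Lmat :: "int^2^2" where
  "Lmat = (\<chi> i j. if i = 2 \<and> j = 1 then 0 else 1)"

definition Rmat :: "int^2^2" where
  "Rmat = (\<chi> i j. if i = 1 \<and> j = 2 then 0 else 1)"

definition word_mat :: "bool list \<Rightarrow> int^2^2" where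
  "word_mat w = foldr (\<lambda>b M. (if b then Lmat else Rmat) ** M) w (mat 1)"

definition word_trace :: "bool list \<Rightarrow> int" where
  "word_trace w = trace (word_mat w)"

definition trace_dist :: "'d rgraph \<Rightarrow> 'd \<Rightarrow> 'd \<Rightarrow> ereal" where
  "trace_dist G h1 h2 =
     Inf ((\<lambda>w. ereal (real_of_int (word_trace w))) `
          {w \<in> path_words G h1 h2. word_trace w > 2})"

definition safe :: "real \<Rightarrow> 'd rgraph \<Rightarrow> bool" where
  "safe \<tau>0 G \<longleftrightarrow>
     (\<forall>h\<in>half_edges G. \<forall>h'\<in>half_edges G. h \<noteq> h' \<longrightarrow> ereal \<tau>0 \<le> trace_dist G h h') \<and>
     (\<forall>h\<in>half_edges G. \<forall>h'\<in>half_edges G. \<forall>k b. h \<noteq> h' \<and> replicate k b \<in> path_words G h h'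
          \<longrightarrow> real k \<ge> sqrt (\<tau>0 - 2))"

end

theory Submission
  imports Defs "HOL-Library.Sublist"
begin


fun wm :: "bool list \<Rightarrow> int \<times> int \<times> int \<times> int" where
  "wm [] = (1,0,0,1)"
| "wm (x#xs) = (case wm xs of (a,b,c,d) \<Rightarrow> if x then (a+c, b+d, c, d) else (a, b, a+c, b+d))"

definition tr4 :: "int \<times> int \<times> int \<times> int \<Rightarrow> int" where
  "tr4 m = (case m of (a,b,c,d) \<Rightarrow> a + d)"

definition le4 :: "int \<times> int \<times> int \<times> int \<Rightarrow> int \<times> int \<times> int \<times> int \<Rightarrow> bool" where
  "le4 m n = (case m of (a,b,c,d) \<Rightarrow> case n of (a',b',c',d') \<Rightarrow> a \<le> a' \<and> b \<le> b' \<and> c \<le> c' \<and> d \<le> d')"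

lemma word_mat_Cons: "word_mat (x#xs) = (if x then Lmat else Rmat) ** word_mat xs"
  by (simp add: word_mat_def)

lemma word_mat_entries:
  "word_mat w $ 1 $ 1 = fst (wm w) \<and> word_mat w $ 1 $ 2 = fst (snd (wm w)) \<and>
   word_mat w $ 2 $ 1 = fst (snd (snd (wm w))) \<and> word_mat w $ 2 $ 2 = snd (snd (snd (wm w)))"
proof (induction w)
  case Nil
  then show ?case by (simp add: word_mat_def mat_def)
next
  case (Cons x w)
  obtain a b c d where e: "wm w = (a,b,c,d)" by (cases "wm w") auto
  show ?case using Cons e
    by (simp add: word_mat_Cons matrix_matrix_mult_def sum_2 Lmat_def Rmat_def)
qed

lemma word_trace_wm: "word_trace w = tr4 (wm w)"
proof -
  obtain a b c d where e: "wm w = (a,b,c,d)" by (cases "wm w") auto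
  show ?thesis using word_mat_entries[of w] e by (simp add: word_trace_def trace_def sum_2 tr4_def)
qed

lemma wm_ge: "case wm w of (a,b,c,d) \<Rightarrow> 1 \<le> a \<and> 0 \<le> b \<and> 0 \<le> c \<and> 1 \<le> d"
  by (induction w) (auto split: prod.splits)

lemma le4_trans: "le4 m n \<Longrightarrow> le4 n p \<Longrightarrow> le4 m p"
  by (auto simp: le4_def split: prod.splits)

lemma wm_Cons_ge: "le4 (wm xs) (wm (x#xs))"
  using wm_ge[of xs] by (auto simp: le4_def split: prod.splits)

lemma wm_Cons_mono: "le4 (wm xs) (wm ys) \<Longrightarrow> le4 (wm (x#xs)) (wm (x#ys))"
  by (auto simp: le4_def split: prod.splits)

lemma wm_subseq: "subseq u w \<Longrightarrow> le4 (wm u) (wm w)"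
proof (induction rule: list_emb.induct)
  case (list_emb_Nil ys)
  then show ?case using wm_ge[of ys] by (auto simp: le4_def split: prod.splits)
next
  case (list_emb_Cons xs ys y)
  then show ?case using wm_Cons_ge le4_trans by blast
next
  case (list_emb_Cons2 x y xs ys)
  then show ?case using wm_Cons_mono by simp
qed

lemma trace_subseq: "subseq u w \<Longrightarrow> word_trace u \<le> word_trace w"
  using wm_subseq[of u w] by (auto simp: word_trace_wm tr4_def le4_def split: prod.splits)

lemma wm_repT: "wm (replicate k True @ ys) = (case wm ys of (a,b,c,d) \<Rightarrow> (a + int k * c, b + int k * d, c, d))"
  by (induction k) (auto split: prod.splits simp: algebra_simps)

lemma wm_repF: "wm (replicate k False @ ys) = (case wm ys of (a,b,c,d) \<Rightarrow> (a, b, c + int k * a, d + int k * b))"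
  by (induction k) (auto split: prod.splits simp: algebra_simps)

lemma trace_two_blocks: "word_trace (replicate k b @ replicate j (\<not> b)) = 2 + int k * int j"
proof (cases b)
  case True
  then show ?thesis using wm_repT[of k "replicate j False"] wm_repF[of j "[]"]
    by (simp add: word_trace_wm tr4_def)
next
  case False
  then show ?thesis using wm_repF[of k "replicate j True"] wm_repT[of j "[]"]
    by (simp add: word_trace_wm tr4_def)
qed

lemma trace_pure: "word_trace (replicate k b) = 2"
  using trace_two_blocks[of k b 0] by simp

definition mixed :: "bool list \<Rightarrow> bool" where
  "mixed w \<longleftrightarrow> True \<in> set w \<and> False \<in> set w"

lemma not_mixed_pure: "\<not> mixed w \<Longrightarrow> \<exists>c. w = replicate (length w) c"
  unfolding mixed_def
  by (metis (full_types) replicate_length_same)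

lemma mixed_iff: "mixed w \<longleftrightarrow> word_trace w > 2"
proof
  assume m: "mixed w"
  then obtain u v where uv: "w = u @ True # v" unfolding mixed_def by (meson split_list)
  have "subseq [True, False] w \<or> subseq [False, True] w"
  proof (cases "False \<in> set v")
    case True
    then have "subseq [False] v" by (simp add: subseq_singleton_left)
    then have "subseq ([] @ [True, False]) (u @ True # v)"
      by (intro list_emb_append_mono) auto
    then show ?thesis using uv by simp
  next
    case False
    then have "False \<in> set u" using m uv unfolding mixed_def by auto
    then have "subseq [False] u" by (simp add: subseq_singleton_left)
    then have "subseq ([False] @ [True]) (u @ [True] @ v)"
      by (intro list_emb_append_mono) auto
    then show ?thesis using uv by simp
  qed
  moreover have "word_trace [True, False] = 3" "word_trace [False, True] = 3"
    by (simp_all add: word_trace_wm tr4_def)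
  ultimately show "word_trace w > 2" using trace_subseq by fastforce
next
  assume "word_trace w > 2"
  then show "mixed w"
  proof (rule contrapos_pp)
    assume "\<not> mixed w"
    then obtain c where "w = replicate (length w) c" using not_mixed_pure by blast
    then have "word_trace w = 2" using trace_pure by metis
    then show "\<not> word_trace w > 2" by simp
  qed
qed



lemma walk_Cons_Cons: "walk G e (b # c # w) f \<longleftrightarrow> opp G (exit_dart G b e) \<noteq> exit_dart G b e \<and> walk G (opp G (exit_dart G b e)) (c # w) f"
  by (simp add: Let_def)

lemma walk_append:
  "u \<noteq> [] \<Longrightarrow> v \<noteq> [] \<Longrightarrow> walk G e (u @ v) f \<longleftrightarrow> (\<exists>x. walk G e u x \<and> opp G x \<noteq> x \<and> walk G (opp G x) v f)"
proof (induction u arbitrary: e)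
  case Nil
  then show ?case by simp
next
  case (Cons a u)
  show ?case
  proof (cases u)
    case Nil
    then show ?thesis using Cons.prems by (cases v) (auto simp: Let_def)
  next
    case (Cons c u')
    then show ?thesis using Cons.IH[of "opp G (exit_dart G a e)"] Cons.prems
      by (auto simp: Let_def)
  qed
qed

lemma walk_nonempty: "walk G e w f \<Longrightarrow> w \<noteq> []"
  by (cases w) auto

context
  fixes G :: "'d rgraph"
  assumes tri: "trivalent_ribbon_graph G"
begin

lemma rot_in: "d \<in> darts G \<Longrightarrow> rot G d \<in> darts G"
  using tri unfolding trivalent_ribbon_graph_def bij_betw_def by auto

lemma rot3: "d \<in> darts G \<Longrightarrow> rot G (rot G (rot G d)) = d"
  using tri unfolding trivalent_ribbon_graph_def by auto

lemma rot_inj: "d \<in> darts G \<Longrightarrow> d' \<in> darts G \<Longrightarrow> rot G d = rot G d' \<Longrightarrow> d = d'"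
  using tri unfolding trivalent_ribbon_graph_def bij_betw_def inj_on_def by auto

lemma opp_in: "d \<in> darts G \<Longrightarrow> opp G d \<in> darts G"
  using tri unfolding trivalent_ribbon_graph_def by auto

lemma opp_opp: "d \<in> darts G \<Longrightarrow> opp G (opp G d) = d"
  using tri unfolding trivalent_ribbon_graph_def by auto

lemma exit_in: "d \<in> darts G \<Longrightarrow> exit_dart G b d \<in> darts G"
  by (simp add: exit_dart_def rot_in)

lemma exit_inj: "d \<in> darts G \<Longrightarrow> d' \<in> darts G \<Longrightarrow> exit_dart G b d = exit_dart G b d' \<Longrightarrow> d = d'"
  unfolding exit_dart_def using rot_inj rot_in by (cases b) auto

lemma walk_darts: "walk G e w f \<Longrightarrow> e \<in> darts G \<Longrightarrow> f \<in> darts G"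
proof (induction w arbitrary: e)
  case Nil
  then show ?case by simp
next
  case (Cons a w)
  then show ?case
    by (cases w) (auto simp: Let_def exit_in opp_in)
qed

lemma turn:
  assumes "d \<in> darts G" "exit_dart G b1 (exit_dart G a d) \<noteq> d"
  shows "b1 = a \<and> exit_dart G b1 (exit_dart G a d) = exit_dart G (\<not> a) d"
  using assms rot3[of d] unfolding exit_dart_def
  by (cases a; cases b1) auto

lemma walk_same_first:
  "walk G z (b1 # B0) f \<Longrightarrow> exit_dart G b1 z = exit_dart G c d \<Longrightarrow> walk G d (c # B0) f"
  by (cases B0) (auto simp: Let_def)

lemma pure_back_step:
  assumes "walk G a (replicate (Suc (Suc n)) b) z"
  shows "\<exists>x. walk G a (replicate (Suc n) b) x \<and> opp G x \<noteq> x \<and> exit_dart G b (opp G x) = z"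
proof -
  have "replicate (Suc (Suc n)) b = replicate (Suc n) b @ [b]"
    by (simp add: replicate_append_same)
  then have w: "walk G a (replicate (Suc n) b @ [b]) z" using assms by (simp only:)
  have "\<exists>x. walk G a (replicate (Suc n) b) x \<and> opp G x \<noteq> x \<and> walk G (opp G x) [b] z"
  proof -
    have ap: "walk G a (replicate (Suc n) b @ [b]) z \<longleftrightarrow>
      (\<exists>x. walk G a (replicate (Suc n) b) x \<and> opp G x \<noteq> x \<and> walk G (opp G x) [b] z)"
      by (rule walk_append) simp_all
    show ?thesis using ap w by blast
  qed
  then obtain x where x: "walk G a (replicate (Suc n) b) x" "opp G x \<noteq> x" "walk G (opp G x) [b] z"
    by blast
  have "exit_dart G b (opp G x) = z" using x(3) by simp
  then show ?thesis using x(1,2) by blast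
qed

lemma pure_back:
  assumes "a \<in> darts G" "a' \<in> darts G" "opp G a = a" "opp G a' = a'"
  shows "walk G a (replicate k b) z \<Longrightarrow> walk G a' (replicate j b) z \<Longrightarrow> a = a'"
proof (induction k arbitrary: j z)
  case 0
  then show ?case by simp
next
  case (Suc k)
  note ka = Suc.prems(1) and ja = Suc.prems(2)
  show ?case
  proof (cases k)
    case 0
    then have z: "exit_dart G b a = z" using ka by simp
    show ?thesis
    proof (cases j)
      case 0 then show ?thesis using ja by simp
    next
      case (Suc j')
      show ?thesis
      proof (cases j')
        case 0
        then show ?thesis using ja Suc z exit_inj assms by auto
      next
        case (Suc n)
        then obtain x where x: "walk G a' (replicate (Suc n) b) x" "opp G x \<noteq> x" "exit_dart G b (opp G x) = z"
          using pure_back_step ja \<open>j = Suc j'\<close> by blast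
        have xd: "x \<in> darts G" using walk_darts x(1) assms(2) by blast
        then have "opp G x = a" using exit_inj[of "opp G x" a b] opp_in x(3) z assms(1) by auto
        then show ?thesis using x(2) xd opp_opp assms(3) by metis
      qed
    qed
  next
    case (Suc n)
    then obtain x where x: "walk G a (replicate (Suc n) b) x" "opp G x \<noteq> x" "exit_dart G b (opp G x) = z"
      using pure_back_step ka by blast
    have xd: "x \<in> darts G" using walk_darts x(1) assms(1) by blast
    show ?thesis
    proof (cases j)
      case 0 then show ?thesis using ja by simp
    next
      case (Suc j')
      show ?thesis
      proof (cases j')
        case 0
        then have z: "exit_dart G b a' = z" using ja Suc by simp
        then have "opp G x = a'" using exit_inj[of "opp G x" a' b] opp_in x(3) xd assms(2) by auto
        then show ?thesis using x(2) xd opp_opp assms(4) by metis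
      next
        case (Suc m)
        then obtain y where y: "walk G a' (replicate (Suc m) b) y" "opp G y \<noteq> y" "exit_dart G b (opp G y) = z"
          using pure_back_step ja \<open>j = Suc j'\<close> by blast
        have yd: "y \<in> darts G" using walk_darts y(1) assms(2) by blast
        have "opp G x = opp G y" using exit_inj[of "opp G x" "opp G y" b] opp_in xd yd x(3) y(3) by auto
        then have "x = y" using opp_opp xd yd by metis
        then show ?thesis using Suc.IH x(1) y(1) \<open>k = Suc n\<close> by blast
      qed
    qed
  qed
qed

lemma diverge:
  assumes "e \<in> darts G" "opp G e = e" "opp G f = f" "e \<noteq> f"
  shows "walk G e A z \<Longrightarrow> walk G z B f \<Longrightarrow>
    \<exists>A1 \<alpha> A2 B1 B2. A = A1 @ [\<alpha>] @ A2 \<and> B = B1 @ [\<alpha>] @ B2 \<and> walk G e (A1 @ [\<not> \<alpha>] @ B2) f"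
proof (induction A arbitrary: z B rule: rev_induct)
  case Nil
  then show ?case by simp
next
  case (snoc a A0)
  note wA = snoc.prems(1) and wB = snoc.prems(2)
  obtain b1 B0 where B: "B = b1 # B0" using wB by (cases B) auto
  have "\<exists>d. d \<in> darts G \<and> z = exit_dart G a d \<and>
        ((A0 = [] \<and> d = e) \<or> (A0 \<noteq> [] \<and> (\<exists>x. walk G e A0 x \<and> opp G x \<noteq> x \<and> d = opp G x \<and> x \<in> darts G)))"
  proof (cases "A0 = []")
    case True
    then show ?thesis using wA assms(1) by auto
  next
    case False
    then obtain x where x: "walk G e A0 x" "opp G x \<noteq> x" "walk G (opp G x) [a] z"
      using wA walk_append[of A0 "[a]" G e z] by auto
    have "x \<in> darts G" using walk_darts x(1) assms(1) by blast
    then show ?thesis using x False opp_in by auto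
  qed
  then obtain d where d: "d \<in> darts G" "z = exit_dart G a d"
    "(A0 = [] \<and> d = e) \<or> (A0 \<noteq> [] \<and> (\<exists>x. walk G e A0 x \<and> opp G x \<noteq> x \<and> d = opp G x \<and> x \<in> darts G))"
    by blast
  show ?case
  proof (cases "exit_dart G b1 z = d")
    case False
    then have t: "b1 = a" "exit_dart G b1 z = exit_dart G (\<not> a) d" using turn d(1,2) by auto
    have wd: "walk G d ((\<not> a) # B0) f" using walk_same_first wB B t(2) by blast
    show ?thesis
    proof (cases "A0 = []")
      case True
      then have "walk G e ([] @ [\<not> a] @ B0) f" using d(3) wd by auto
      then show ?thesis using True B t(1)
        by (intro exI[of _ "[]"] exI[of _ a] exI[of _ "[]"] exI[of _ "[]"] exI[of _ B0]) auto
    next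
      case False
      then obtain x where x: "walk G e A0 x" "opp G x \<noteq> x" "d = opp G x" using d(3) by auto
      have "walk G e (A0 @ [\<not> a] @ B0) f"
        using walk_append[of A0 "[\<not> a] @ B0" G e f] x wd False by auto
      then show ?thesis using B t(1)
        by (intro exI[of _ A0] exI[of _ a] exI[of _ "[]"] exI[of _ "[]"] exI[of _ B0]) auto
    qed
  next
    case True
    show ?thesis
    proof (cases "A0 = []")
      case A0: True
      then have de: "d = e" using d(3) by auto
      show ?thesis
      proof (cases B0)
        case Nil
        then show ?thesis using wB B True de assms(4) by simp
      next
        case (Cons c B')
        then show ?thesis using wB B True de assms(2) by (simp add: Let_def)
      qed
    next
      case False
      then obtain x where x: "walk G e A0 x" "opp G x \<noteq> x" "d = opp G x" "x \<in> darts G" using d(3) by auto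
      show ?thesis
      proof (cases B0)
        case Nil
        then have "f = d" using wB B True by simp
        then show ?thesis using assms(3) x opp_opp by metis
      next
        case (Cons c B')
        then have "walk G (opp G d) B0 f" using wB B True by (simp add: Let_def)
        then have "walk G x B0 f" using x opp_opp by metis
        then obtain A1 \<alpha> A2 B1 B2 where ih: "A0 = A1 @ [\<alpha>] @ A2" "B0 = B1 @ [\<alpha>] @ B2"
          "walk G e (A1 @ [\<not> \<alpha>] @ B2) f"
          using snoc.IH x(1) by blast
        show ?thesis
          by (rule exI[of _ A1], rule exI[of _ \<alpha>], rule exI[of _ "A2 @ [a]"],
              rule exI[of _ "b1 # B1"], rule exI[of _ B2]) (use ih B in auto)
      qed
    qed
  qed
qed

end



lemma glue_darts[simp]: "darts (glue G h1 h2) = darts G"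
  and glue_rot[simp]: "rot (glue G h1 h2) = rot G"
  and glue_opp: "opp (glue G h1 h2) = (opp G)(h1 := h2, h2 := h1)"
  by (simp_all add: glue_def)

lemma glue_exit[simp]: "exit_dart (glue G h1 h2) = exit_dart G"
  by (simp add: exit_dart_def fun_eq_iff)

lemma first_cross:
  "walk (glue G h1 h2) e W f \<Longrightarrow> walk G e W f \<or>
    (\<exists>u v x. W = u @ v \<and> walk G e u x \<and> (x = h1 \<or> x = h2) \<and> walk (glue G h1 h2) (opp (glue G h1 h2) x) v f)"
proof (induction W arbitrary: e)
  case Nil
  then show ?case by simp
next
  case (Cons a W)
  show ?case
  proof (cases W)
    case Nil
    then show ?thesis using Cons.prems by simp
  next
    case (Cons c W')
    define y where "y = exit_dart G a e"
    have w: "opp (glue G h1 h2) y \<noteq> y" "walk (glue G h1 h2) (opp (glue G h1 h2) y) W f"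
      using Cons.prems \<open>W = c # W'\<close> by (simp_all add: Let_def y_def)
    show ?thesis
    proof (cases "y = h1 \<or> y = h2")
      case True
      then show ?thesis using w
        by (intro disjI2 exI[of _ "[a]"] exI[of _ W] exI[of _ y]) (auto simp: y_def)
    next
      case False
      then have oy: "opp (glue G h1 h2) y = opp G y" by (simp add: glue_opp)
      from Cons.IH[of "opp G y"] w oy
      consider "walk G (opp G y) W f"
        | u v x where "W = u @ v" "walk G (opp G y) u x" "x = h1 \<or> x = h2"
            "walk (glue G h1 h2) (opp (glue G h1 h2) x) v f"
        by auto
      then show ?thesis
      proof cases
        case 1
        then show ?thesis using w oy \<open>W = c # W'\<close> by (simp add: Let_def y_def)
      next
        case 2
        obtain u1 u' where u: "u = u1 # u'" using 2(2) by (cases u) auto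
        have "walk G e (a # u) x" using 2(2) w(1) oy u by (simp add: Let_def y_def)
        then show ?thesis using 2 by (intro disjI2 exI[of _ "a # u"] exI[of _ v] exI[of _ x]) auto
      qed
    qed
  qed
qed

lemma last_cross:
  "walk (glue G h1 h2) e W f \<Longrightarrow> walk G e W f \<or>
    (\<exists>u v x. W = u @ v \<and> walk (glue G h1 h2) e u x \<and> (x = h1 \<or> x = h2) \<and> walk G (opp (glue G h1 h2) x) v f)"
proof (induction W arbitrary: e)
  case Nil
  then show ?case by simp
next
  case (Cons a W)
  show ?case
  proof (cases W)
    case Nil
    then show ?thesis using Cons.prems by simp
  next
    case (Cons c W')
    define y where "y = exit_dart G a e"
    have w: "opp (glue G h1 h2) y \<noteq> y" "walk (glue G h1 h2) (opp (glue G h1 h2) y) W f"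
      using Cons.prems \<open>W = c # W'\<close> by (simp_all add: Let_def y_def)
    from Cons.IH[OF w(2)]
    consider "walk G (opp (glue G h1 h2) y) W f"
      | u v x where "W = u @ v" "walk (glue G h1 h2) (opp (glue G h1 h2) y) u x" "x = h1 \<or> x = h2"
            "walk G (opp (glue G h1 h2) x) v f"
      by blast
    then show ?thesis
    proof cases
      case 1
      show ?thesis
      proof (cases "y = h1 \<or> y = h2")
        case True
        then show ?thesis using 1
          by (intro disjI2 exI[of _ "[a]"] exI[of _ W] exI[of _ y]) (auto simp: y_def)
      next
        case False
        then have oy: "opp (glue G h1 h2) y = opp G y" by (simp add: glue_opp)
        then show ?thesis using 1 w \<open>W = c # W'\<close> by (simp add: Let_def y_def)
      qed
    next
      case 2
      obtain u1 u' where u: "u = u1 # u'" using 2(2) by (cases u) auto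
      have "walk (glue G h1 h2) e (a # u) x" using 2(2) w(1) u by (simp add: Let_def y_def)
      then show ?thesis using 2 by (intro disjI2 exI[of _ "a # u"] exI[of _ v] exI[of _ x]) auto
    qed
  qed
qed



lemma safe_tr:
  assumes "safe \<tau>0 G" "a \<in> half_edges G" "b \<in> half_edges G" "a \<noteq> b" "walk G a w b" "mixed w"
  shows "\<tau>0 \<le> word_trace w"
proof -
  have mem: "w \<in> {w \<in> path_words G a b. word_trace w > 2}"
  proof -
    have "w \<in> path_words G a b" using assms(2,3,5) unfolding path_words_def by blast
    moreover have "word_trace w > 2" using assms(6) mixed_iff by blast
    ultimately show ?thesis by blast
  qed
  have "\<forall>h\<in>half_edges G. \<forall>h'\<in>half_edges G. h \<noteq> h' \<longrightarrow> ereal \<tau>0 \<le> trace_dist G h h'"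
    using assms(1) unfolding safe_def by (rule conjunct1)
  then have "ereal \<tau>0 \<le> trace_dist G a b" using assms(2-4) by blast
  also have "\<dots> \<le> ereal (real_of_int (word_trace w))"
    unfolding trace_dist_def by (rule INF_lower[OF mem])
  finally show ?thesis by simp
qed

lemma safe_cusp:
  assumes "safe \<tau>0 G" "a \<in> half_edges G" "b \<in> half_edges G" "a \<noteq> b" "walk G a (replicate k c) b"
  shows "sqrt (\<tau>0 - 2) \<le> real k"
proof -
  have "replicate k c \<in> path_words G a b" using assms(2,3,5) unfolding path_words_def by blast
  moreover have "\<forall>h\<in>half_edges G. \<forall>h'\<in>half_edges G. \<forall>k b. h \<noteq> h' \<and> replicate k b \<in> path_words G h h'
          \<longrightarrow> real k \<ge> sqrt (\<tau>0 - 2)" using assms(1) unfolding safe_def by (rule conjunct2)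
  ultimately show ?thesis using assms(2-4) by blast
qed

lemma seg:
  assumes "safe \<tau>0 G" "a \<in> half_edges G" "b \<in> half_edges G" "a \<noteq> b" "walk G a w b"
  shows "(mixed w \<and> \<tau>0 \<le> word_trace w) \<or> (\<exists>c. w = replicate (length w) c \<and> sqrt (\<tau>0 - 2) \<le> real (length w))"
proof (cases "mixed w")
  case True
  then show ?thesis using safe_tr[OF assms True] by blast
next
  case False
  then obtain c where c: "w = replicate (length w) c" using not_mixed_pure by blast
  have "walk G a (replicate (length w) c) b" by (subst c[symmetric]) (rule assms(5))
  then have "sqrt (\<tau>0 - 2) \<le> real (length w)" using safe_cusp[of \<tau>0 G a b "length w" c] assms(1-4) by blast
  then show ?thesis by (intro disjI2 exI[of _ c] conjI[OF c])
qed

lemma bound: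
  assumes "\<tau>0 \<ge> 3" "sqrt (\<tau>0 - 2) \<le> real k" "sqrt (\<tau>0 - 2) \<le> real j"
  shows "\<tau>0 \<le> 2 + real k * real j"
proof -
  let ?s = "sqrt (\<tau>0 - 2)"
  have s0: "0 \<le> ?s" using assms(1) by simp
  have "?s * ?s = \<tau>0 - 2" using assms(1) by simp
  moreover have "?s * ?s \<le> real k * real j" using mult_mono[OF assms(2,3)] s0 by simp
  ultimately show ?thesis by simp
qed

lemma seg2:
  assumes "safe \<tau>0 G" "a \<in> half_edges G" "b \<in> half_edges G" "a \<noteq> b" "walk G a w b"
  shows "(mixed w \<and> \<tau>0 \<le> word_trace w) \<or> (\<exists>c n. w = replicate n c \<and> sqrt (\<tau>0 - 2) \<le> real n)"
  using seg[OF assms] by blast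



context
  fixes \<tau>0 :: real and G :: "'d rgraph" and h1 h2 :: 'd
  assumes t3: "\<tau>0 \<ge> 3" and tri: "trivalent_ribbon_graph G" and sf: "safe \<tau>0 G"
    and h1: "h1 \<in> half_edges G" and h2: "h2 \<in> half_edges G" and h12: "h1 \<noteq> h2"
begin

lemma opp'_h1: "opp (glue G h1 h2) h1 = h2" and opp'_h2: "opp (glue G h1 h2) h2 = h1"
  using h12 by (simp_all add: glue_opp)

lemma opp'_other: "x \<noteq> h1 \<Longrightarrow> x \<noteq> h2 \<Longrightarrow> opp (glue G h1 h2) x = opp G x"
  by (simp add: glue_opp)

lemma he': "half_edges (glue G h1 h2) = half_edges G - {h1, h2}"
  using h12 by (auto simp: half_edges_def glue_opp)

lemma he_darts: "a \<in> half_edges G \<Longrightarrow> a \<in> darts G \<and> opp G a = a"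
  by (simp add: half_edges_def)

lemma partner: "x = h1 \<or> x = h2 \<Longrightarrow> (opp (glue G h1 h2) x = h1 \<or> opp (glue G h1 h2) x = h2) \<and>
   opp (glue G h1 h2) x \<noteq> x \<and> opp (glue G h1 h2) (opp (glue G h1 h2) x) = x"
  using h12 opp'_h1 opp'_h2 by auto

lemma hh_half: "x = h1 \<or> x = h2 \<Longrightarrow> x \<in> half_edges G"
  using h1 h2 by auto

lemma two_blocks_bound:
  assumes "sqrt (\<tau>0 - 2) \<le> real k" "sqrt (\<tau>0 - 2) \<le> real j"
    "subseq (replicate k b @ replicate j (\<not> b)) W"
  shows "\<tau>0 \<le> word_trace W"
proof -
  have "\<tau>0 \<le> 2 + real k * real j" using bound[OF t3 assms(1,2)] .
  also have "\<dots> = word_trace (replicate k b @ replicate j (\<not> b))" by (simp add: trace_two_blocks)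
  also have "\<dots> \<le> word_trace W" using trace_subseq[OF assms(3)] by simp
  finally show ?thesis .
qed

lemma glued_trace:
  assumes hh: "h \<in> half_edges (glue G h1 h2)" "h' \<in> half_edges (glue G h1 h2)" "h \<noteq> h'"
    and wW: "walk (glue G h1 h2) h W h'" and mx: "mixed W"
  shows "\<tau>0 \<le> word_trace W"
proof -
  let ?G' = "glue G h1 h2"
  let ?s = "sqrt (\<tau>0 - 2)"
  have hG: "h \<in> half_edges G" "h \<noteq> h1" "h \<noteq> h2" using hh(1) he' by auto
  have h'G: "h' \<in> half_edges G" "h' \<noteq> h1" "h' \<noteq> h2" using hh(2) he' by auto
  have segdone: "\<tau>0 \<le> word_trace W" if "a \<in> half_edges G" "b \<in> half_edges G" "a \<noteq> b"
      "walk G a u b" "subseq u W" "mixed u" for a b u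
  proof -
    have "\<tau>0 \<le> word_trace u" using safe_tr[OF sf that(1-4) that(6)] .
    also have "\<dots> \<le> word_trace W" using trace_subseq[OF that(5)] by simp
    finally show ?thesis .
  qed
  from first_cross[OF wW]
  consider (A) "walk G h W h'"
    | (B) w0 W1 x0 where "W = w0 @ W1" "walk G h w0 x0" "x0 = h1 \<or> x0 = h2"
        "walk ?G' (opp ?G' x0) W1 h'"
    by blast
  then show ?thesis
  proof cases
    case A
    then show ?thesis using segdone[OF hG(1) h'G(1) hh(3) A] mx by simp
  next
    case B
    have x0h: "x0 \<in> half_edges G" using hh_half B(3) .
    have hx0: "h \<noteq> x0" using B(3) hG by auto
    show ?thesis
    proof (cases "mixed w0")
      case True
      then show ?thesis using segdone[OF hG(1) x0h hx0 B(2)] B(1) by auto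
    next
      case False
      from seg2[OF sf hG(1) x0h hx0 B(2)] False
      obtain b k where w0: "w0 = replicate k b" and k: "?s \<le> real k" by blast
      have allb0: "\<forall>x\<in>set w0. x = b" using w0 by simp
      define y0 where "y0 = opp ?G' x0"
      have y0: "y0 = h1 \<or> y0 = h2" "y0 \<noteq> x0" "opp ?G' y0 = x0" using partner[OF B(3)] y0_def by auto
      have y0h: "y0 \<in> half_edges G" using hh_half y0(1) .
      have y0h': "y0 \<noteq> h'" using y0(1) h'G by auto
      from last_cross[OF B(4)[folded y0_def]]
      consider (B1) "walk G y0 W1 h'"
        | (B2) M wn x' where "W1 = M @ wn" "walk ?G' y0 M x'" "x' = h1 \<or> x' = h2"
            "walk G (opp ?G' x') wn h'"
        by blast
      then show ?thesis
      proof cases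
        case B1
        from seg2[OF sf y0h h'G(1) y0h' B1]
        consider "mixed W1 \<and> \<tau>0 \<le> word_trace W1" | c m where "W1 = replicate m c" "?s \<le> real m"
          by blast
        then show ?thesis
        proof cases
          case 1
          then show ?thesis using segdone[OF y0h h'G(1) y0h' B1] B(1) by auto
        next
          case 2
          show ?thesis
          proof (cases "c = b")
            case True
            then have "\<not> mixed W" using B(1) w0 2(1) by (auto simp: mixed_def)
            then show ?thesis using mx by simp
          next
            case False
            then have "c = (\<not> b)" by auto
            then show ?thesis using two_blocks_bound[OF k 2(2), of b W] B(1) w0 2(1) by simp
          qed
        qed
      next
        case B2
        define y where "y = opp ?G' x'"
        have y: "y = h1 \<or> y = h2" "opp ?G' y = x'" using partner[OF B2(3)] y_def by auto
        have yh: "y \<in> half_edges G" using hh_half y(1) .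
        have yh': "y \<noteq> h'" using y(1) h'G by auto
        have Wd: "W = w0 @ M @ wn" using B(1) B2(1) by simp
        have wn: "walk G y wn h'" using B2(4) y_def by simp
        from seg2[OF sf yh h'G(1) yh' wn]
        consider "mixed wn \<and> \<tau>0 \<le> word_trace wn" | c m where "wn = replicate m c" "?s \<le> real m"
          by blast
        then show ?thesis
        proof cases
          case 1
          then show ?thesis using segdone[OF yh h'G(1) yh' wn] Wd by auto
        next
          case 2
          note wnr = 2
          show ?thesis
          proof (cases "c = b")
            case False
            then have "c = (\<not> b)" by auto
            moreover have "subseq (replicate k b @ replicate m c) W"
              using Wd w0 wnr(1) by (auto intro: list_emb_append_mono)
            ultimately show ?thesis using two_blocks_bound[OF k wnr(2), of b W] by simp
          next
            case True
            have allbn: "\<forall>x\<in>set wn. x = b" using wnr(1) True by simp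
            have nbW: "(\<not> b) \<in> set W" using mx by (cases b) (auto simp: mixed_def)
            have nbM: "(\<not> b) \<in> set M" using nbW allb0 allbn Wd by auto
            show ?thesis
            proof (cases "y = x0")
              case True
              have wn': "walk G x0 wn h'" using wn True by simp
              obtain A1 \<alpha> A2 B1 B2 where D: "w0 = A1 @ [\<alpha>] @ A2" "wn = B1 @ [\<alpha>] @ B2"
                  "walk G h (A1 @ [\<not> \<alpha>] @ B2) h'"
                using diverge[OF tri _ _ _ hh(3) B(2) wn'] he_darts[OF hG(1)] he_darts[OF h'G(1)] by blast
              have ab: "\<alpha> = b" using D(1) allb0 by simp
              have A1b: "\<forall>x\<in>set A1. x = b" using D(1) allb0 by simp
              have B2b: "\<forall>x\<in>set B2. x = b" using D(2) allbn by simp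
              let ?C = "A1 @ [\<not> b] @ B2"
              have sub: "subseq ?C W"
              proof -
                have s1: "subseq A1 w0" using D(1) by auto
                have s2: "subseq [\<not> b] M" using nbM by (simp add: subseq_singleton_left)
                have s3: "subseq B2 wn" using D(2) by (auto intro: suffix_imp_subseq simp: suffix_def)
                have "subseq (A1 @ [\<not> b] @ B2) (w0 @ M @ wn)"
                  by (rule list_emb_append_mono[OF s1 list_emb_append_mono[OF s2 s3]])
                then show ?thesis using Wd by simp
              qed
              have wC: "walk G h ?C h'" using D(3) ab by simp
              from seg2[OF sf hG(1) h'G(1) hh(3) wC]
              consider "mixed ?C \<and> \<tau>0 \<le> word_trace ?C" | c' n where "?C = replicate n c'" "?s \<le> real n"
                by blast
              then show ?thesis
              proof cases
                case 1
                then show ?thesis using segdone[OF hG(1) h'G(1) hh(3) wC sub] by simp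
              next
                case 2
                have setC: "set ?C \<subseteq> {c'}"
                proof -
                  have "set (replicate n c') \<subseteq> {c'}" by auto
                  then show ?thesis using 2(1) by simp
                qed
                then have c': "c' = (\<not> b)" by auto
                have "A1 = []" using A1b setC c' by (cases A1) auto
                moreover have "B2 = []" using B2b setC c' by (cases B2) auto
                moreover have "length ?C = n" using arg_cong[OF 2(1), of length] by simp
                ultimately have "n = 1" by simp
                then have "?s \<le> 1" using 2(2) by simp
                then have "\<tau>0 - 2 \<le> 1" by simp
                moreover have "word_trace W \<ge> 3" using mx mixed_iff by fastforce
                ultimately show ?thesis by linarith
              qed
            next
              case False
              have x'x0: "x' = x0" using False B(3) B2(3) y_def opp'_h1 opp'_h2 h12 by auto
              have yy0: "y = y0" using x'x0 y_def y0_def by simp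
              have wM: "walk ?G' y M x0" using B2(2) yy0 x'x0 by simp
              have yx0: "y \<noteq> x0" using False .
              have distinct_seg: "\<tau>0 \<le> word_trace W" if "walk G y u x0" "subseq (w0 @ u) W" for u
              proof -
                have "subseq u (w0 @ u)" by (intro list_emb_append2) (rule subseq_order.refl)
                then have su: "subseq u W" using that(2) by (rule subseq_order.trans)
                from seg2[OF sf yh x0h yx0 that(1)]
                consider "mixed u \<and> \<tau>0 \<le> word_trace u" | c' n where "u = replicate n c'" "?s \<le> real n"
                  by blast
                then show ?thesis
                proof cases
                  case 1
                  then show ?thesis using segdone[OF yh x0h yx0 that(1) su] by simp
                next
                  case 2
                  show ?thesis
                  proof (cases "c' = b")
                    case True
                    have "h = y" using pure_back[OF tri, of h y k b x0 n] he_darts[OF hG(1)] he_darts[OF yh]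
                        B(2) w0 that(1) 2(1) True by simp
                    then show ?thesis using hG y(1) by auto
                  next
                    case False
                    then have "c' = (\<not> b)" by auto
                    then show ?thesis using two_blocks_bound[OF k 2(2), of b W] that(2) w0 2(1) by simp
                  qed
                qed
              qed
              from first_cross[OF wM]
              consider (M1) "walk G y M x0"
                | (M2) w1 M' x1 where "M = w1 @ M'" "walk G y w1 x1" "x1 = h1 \<or> x1 = h2"
                    "walk ?G' (opp ?G' x1) M' x0"
                by blast
              then show ?thesis
              proof cases
                case M1
                then show ?thesis using distinct_seg[of M] Wd by (auto intro: list_emb_append_mono)
              next
                case M2
                show ?thesis
                proof (cases "x1 = x0")
                  case True
                  have "subseq (w0 @ w1) W" using Wd M2(1) by (auto intro: list_emb_append_mono)
                  then show ?thesis using distinct_seg[of w1] M2(2) True by simp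
                next
                  case False
                  have x1y: "x1 = y" using False M2(3) y(1) yx0 B(3) by auto
                  have oy: "opp ?G' x1 = x0" using x1y y yy0 y0 by simp
                  have wM': "walk ?G' x0 M' x0" using M2(4) oy by simp
                  obtain z v where zv: "z = h1 \<or> z = h2" "suffix v M'" "walk G z v x0"
                  proof -
                    from last_cross[OF wM']
                    consider "walk G x0 M' x0" | u v x where "M' = u @ v" "walk ?G' x0 u x" "x = h1 \<or> x = h2"
                        "walk G (opp ?G' x) v x0"
                      by blast
                    then show ?thesis
                    proof cases
                      case 1
                      then show ?thesis using that[of x0 M'] B(3) by simp
                    next
                      case 2
                      then show ?thesis using that[of "opp ?G' x" v] partner[OF 2(3)]
                        by (auto simp: suffix_def)
                    qed
                  qed
                  have nbv: "(\<not> b) \<in> set v"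
                  proof (rule ccontr)
                    assume "(\<not> b) \<notin> set v"
                    then have "\<forall>x\<in>set v. x = b"
                      by (intro ballI, case_tac x; case_tac b) auto
                    then have rv: "replicate (length v) b = v" by (rule replicate_length_same)
                    have "walk G z (replicate (length v) b) x0" by (subst rv) (rule zv(3))
                    then have "h = z" using pure_back[OF tri, of h z k b x0 "length v"] he_darts[OF hG(1)]
                        he_darts[OF hh_half[OF zv(1)]] B(2) w0 by simp
                    then show False using hG zv(1) by auto
                  qed
                  have nbM': "(\<not> b) \<in> set M'" using nbv zv(2) by (auto simp: suffix_def)
                  have w1y: "walk G y w1 y" using M2(2) x1y by simp
                  obtain A1 \<alpha> A2 B1 B2 where D: "w1 = A1 @ [\<alpha>] @ A2" "wn = B1 @ [\<alpha>] @ B2"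
                      "walk G y (A1 @ [\<not> \<alpha>] @ B2) h'"
                    using diverge[OF tri _ _ _ yh' w1y wn] he_darts[OF yh] he_darts[OF h'G(1)] by blast
                  have ab: "\<alpha> = b" using D(2) allbn by simp
                  have B2b: "\<forall>x\<in>set B2. x = b" using D(2) allbn by simp
                  let ?C = "A1 @ [\<not> b] @ B2"
                  have subC: "subseq ?C ((w1 @ M') @ wn)"
                  proof -
                    have s1: "subseq A1 w1" using D(1) by auto
                    have s2: "subseq [\<not> b] M'" using nbM' by (simp add: subseq_singleton_left)
                    have s3: "subseq B2 wn" using D(2) by (auto intro: suffix_imp_subseq simp: suffix_def)
                    have "subseq ((A1 @ [\<not> b]) @ B2) ((w1 @ M') @ wn)"
                      by (rule list_emb_append_mono[OF list_emb_append_mono[OF s1 s2] s3])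
                    then show ?thesis by simp
                  qed
                  have WW: "W = w0 @ ((w1 @ M') @ wn)" using Wd M2(1) by simp
                  have sub: "subseq ?C W" using subC WW by auto
                  have sub2: "subseq (w0 @ ?C) W" using subC WW by (auto intro: list_emb_append_mono)
                  have wC: "walk G y ?C h'" using D(3) ab by simp
                  from seg2[OF sf yh h'G(1) yh' wC]
                  consider "mixed ?C \<and> \<tau>0 \<le> word_trace ?C" | c' n where "?C = replicate n c'" "?s \<le> real n"
                    by blast
                  then show ?thesis
                  proof cases
                    case 1
                    then show ?thesis using segdone[OF yh h'G(1) yh' wC sub] by simp
                  next
                    case 2
                    have setC: "set ?C \<subseteq> {c'}"
                    proof -
                      have "set (replicate n c') \<subseteq> {c'}" by auto
                      then show ?thesis using 2(1) by simp
                    qed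
                    then have c': "c' = (\<not> b)" by auto
                    have "subseq (replicate k b @ replicate n (\<not> b)) W" using sub2 w0 2(1) c' by simp
                    then show ?thesis using two_blocks_bound[OF k 2(2)] by blast
                  qed
                qed
              qed
            qed
          qed
        qed
      qed
    qed
  qed
qed

lemma glued_cusp:
  assumes hh: "h \<in> half_edges (glue G h1 h2)" "h' \<in> half_edges (glue G h1 h2)" "h \<noteq> h'"
    and wW: "walk (glue G h1 h2) h (replicate K c) h'"
  shows "sqrt (\<tau>0 - 2) \<le> real K"
proof -
  have hG: "h \<in> half_edges G" "h \<noteq> h1" "h \<noteq> h2" using hh(1) he' by auto
  have h'G: "h' \<in> half_edges G" using hh(2) he' by auto
  from first_cross[OF wW]
  consider (A) "walk G h (replicate K c) h'"
    | (B) u v x0 where "replicate K c = u @ v" "walk G h u x0" "x0 = h1 \<or> x0 = h2"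
    by blast
  then show ?thesis
  proof cases
    case A
    then show ?thesis using safe_cusp[OF sf hG(1) h'G hh(3)] by blast
  next
    case B
    have "\<forall>x\<in>set u. x = c" using arg_cong[OF B(1), of set] by (auto split: if_splits)
    then have u: "replicate (length u) c = u" by (rule replicate_length_same)
    have x0h: "x0 \<in> half_edges G" using hh_half B(3) .
    have "walk G h (replicate (length u) c) x0" by (subst u) (rule B(2))
    then have "sqrt (\<tau>0 - 2) \<le> real (length u)"
      using safe_cusp[OF sf hG(1) x0h] B(3) hG by blast
    moreover have "length u \<le> K" using arg_cong[OF B(1), of length] by simp
    ultimately show ?thesis by linarith
  qed
qed

lemma glued_safe: "safe \<tau>0 (glue G h1 h2)"
  unfolding safe_def
proof (intro conjI ballI allI impI)
  fix h h' assume a: "h \<in> half_edges (glue G h1 h2)" "h' \<in> half_edges (glue G h1 h2)" "h \<noteq> h'"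
  show "ereal \<tau>0 \<le> trace_dist (glue G h1 h2) h h'"
    unfolding trace_dist_def
  proof (rule INF_greatest)
    fix w assume "w \<in> {w \<in> path_words (glue G h1 h2) h h'. 2 < word_trace w}"
    then have "walk (glue G h1 h2) h w h'" "mixed w" by (auto simp: path_words_def mixed_iff)
    then show "ereal \<tau>0 \<le> ereal (real_of_int (word_trace w))" using glued_trace[OF a] by simp
  qed
next
  fix h h' k b
  assume a: "h \<in> half_edges (glue G h1 h2)" "h' \<in> half_edges (glue G h1 h2)"
    "h \<noteq> h' \<and> replicate k b \<in> path_words (glue G h1 h2) h h'"
  then show "sqrt (\<tau>0 - 2) \<le> real k" using glued_cusp[OF a(1,2)] by (auto simp: path_words_def)
qed

end


theorem lemma2p6:
  fixes \<tau>0 :: real and G :: "'d rgraph" and h1 h2 :: 'd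
  assumes "\<tau>0 \<ge> 3"
    and "trivalent_ribbon_graph G"
    and "safe \<tau>0 G"
  shows "(h1 \<in> half_edges G \<and> h2 \<in> half_edges G \<and> h1 \<noteq> h2 \<and>
           ereal \<tau>0 \<le> trace_dist G h1 h2 \<longrightarrow> safe \<tau>0 (glue G h1 h2))
         \<and> (card (half_edges G) \<ge> 2 \<longrightarrow>
             (\<exists>a\<in>half_edges G. \<exists>b\<in>half_edges G. a \<noteq> b \<and> ereal \<tau>0 \<le> trace_dist G a b))"
proof (intro conjI impI)
  assume a: "h1 \<in> half_edges G \<and> h2 \<in> half_edges G \<and> h1 \<noteq> h2 \<and> ereal \<tau>0 \<le> trace_dist G h1 h2"
  show "safe \<tau>0 (glue G h1 h2)"
    using glued_safe[OF assms(1,2,3)] a by blast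
next
  assume c: "card (half_edges G) \<ge> 2"
  let ?S = "half_edges G"
  have fin: "finite ?S" using c by (metis card.infinite not_numeral_le_zero)
  have "?S \<noteq> {}" using c by auto
  then obtain a where aS: "a \<in> ?S" by blast
  have "card (?S - {a}) \<ge> 1" using c aS fin by (simp add: card_Diff_singleton)
  then have "?S - {a} \<noteq> {}"
  proof (intro notI)
    assume "?S - {a} = {}"
    then have "card (?S - {a}) = 0" by (simp only: card.empty)
    then show False using \<open>card (?S - {a}) \<ge> 1\<close> by simp
  qed
  then obtain b where bS: "b \<in> ?S" "b \<noteq> a" by blast
  have "\<forall>h\<in>half_edges G. \<forall>h'\<in>half_edges G. h \<noteq> h' \<longrightarrow> ereal \<tau>0 \<le> trace_dist G h h'"
    using assms(3) unfolding safe_def by (rule conjunct1)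
  then show "\<exists>a\<in>half_edges G. \<exists>b\<in>half_edges G. a \<noteq> b \<and> ereal \<tau>0 \<le> trace_dist G a b"
    using aS bS by blast
qed

end
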